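(* Let $X_1,X_2,B_1,B_2$ be topological spaces with continuous maps $f\colon X_1\to X_2$, $r_1\colon X_1\to B_1$, $r_2\colon X_2\to B_2$, $f_0\colon B_1\to B_2$ such that $r_2\circ f=f_0\circ r_1$. Assume $B_1$ and $B_2$ are locally compact Hausdorff and $f_0$ is proper. Then there is a unique continuous map $\tilde f\colon\beta_{B_1}X_1\to\beta_{B_2}X_2$ such that $\tilde f\circ i_1=i_2\circ f$ and $\beta_{B_2}r_2\circ\tilde f=f_0\circ\beta_{B_1}r_1$.
   Context: For a locally compact Hausdorff space $B$ and a space $X$ with continuous $r\colon X\to B$, let $H_X\subseteq\mathrm{C_b}(X)$ be the closed linear span of products $g\cdot(h\circ r)$, $g\in\mathrm{C_b}(X)$, $h\in\mathrm C_0(B)$. The relative Stone--Čech compactification $\beta_BX$ is the spectrum of the commutative C*-algebra $H_X$; $i\colon X\to\beta_BX$ sends $x$ to evaluation at $x$; $\beta_Br\colon\beta_BX\to B$ is the unique continuous map with $\beta_Br\circ i=r$. Here $i_j\colon X_j\to\beta_{B_j}X_j$ denote the canonical maps for $(X_j,r_j)$. *)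

theory Defs
  imports "HOL-Analysis.Analysis"
begin

definition Cb :: "'a topology \<Rightarrow> ('a \<Rightarrow> complex) set" where
  "Cb X = {g. continuous_map X euclidean g \<and> bounded (g ` topspace X) \<and>
              (\<forall>x. x \<notin> topspace X \<longrightarrow> g x = 0)}"

definition C0 :: "'b topology \<Rightarrow> ('b \<Rightarrow> complex) set" where
  "C0 B = {h. continuous_map B euclidean h \<and>
              (\<forall>e>0. \<exists>K. compactin B K \<and> (\<forall>y\<in>topspace B - K. norm (h y) < e))}"

inductive_set lin_span :: "('a \<Rightarrow> complex) set \<Rightarrow> ('a \<Rightarrow> complex) set" for S where
  zero: "(\<lambda>x. 0) \<in> lin_span S"
| base: "g \<in> S \<Longrightarrow> g \<in> lin_span S"
| add: "g \<in> lin_span S \<Longrightarrow> k \<in> lin_span S \<Longrightarrow> (\<lambda>x. g x + k x) \<in> lin_span S"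
| smult: "g \<in> lin_span S \<Longrightarrow> (\<lambda>x. c * g x) \<in> lin_span S"

definition HX :: "'a topology \<Rightarrow> 'b topology \<Rightarrow> ('a \<Rightarrow> 'b) \<Rightarrow> ('a \<Rightarrow> complex) set" where
  "HX X B r = {g \<in> Cb X. \<forall>e>0. \<exists>p \<in> lin_span {(\<lambda>x. g' x * h (r x)) | g' h. g' \<in> Cb X \<and> h \<in> C0 B}.
                  \<forall>x\<in>topspace X. norm (g x - p x) < e}"

definition characters :: "('a \<Rightarrow> complex) set \<Rightarrow> (('a \<Rightarrow> complex) \<Rightarrow> complex) set" where
  "characters A = {\<phi>. \<phi> \<in> extensional A \<and> (\<exists>a\<in>A. \<phi> a \<noteq> 0) \<and>
     (\<forall>a\<in>A. \<forall>b\<in>A. \<phi> (\<lambda>x. a x + b x) = \<phi> a + \<phi> b \<and> \<phi> (\<lambda>x. a x * b x) = \<phi> a * \<phi> b) \<and>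
     (\<forall>c. \<forall>a\<in>A. \<phi> (\<lambda>x. c * a x) = c * \<phi> a)}"

definition spectrum_top :: "('a \<Rightarrow> complex) set \<Rightarrow> (('a \<Rightarrow> complex) \<Rightarrow> complex) topology" where
  "spectrum_top A = subtopology (product_topology (\<lambda>_. euclidean) A) (characters A)"

definition rel_beta :: "'a topology \<Rightarrow> 'b topology \<Rightarrow> ('a \<Rightarrow> 'b) \<Rightarrow> (('a \<Rightarrow> complex) \<Rightarrow> complex) topology" where
  "rel_beta X B r = spectrum_top (HX X B r)"

definition rel_i :: "'a topology \<Rightarrow> 'b topology \<Rightarrow> ('a \<Rightarrow> 'b) \<Rightarrow> 'a \<Rightarrow> (('a \<Rightarrow> complex) \<Rightarrow> complex)" where
  "rel_i X B r x = restrict (\<lambda>g. g x) (HX X B r)"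

definition rel_beta_map :: "'a topology \<Rightarrow> 'b topology \<Rightarrow> ('a \<Rightarrow> 'b) \<Rightarrow> (('a \<Rightarrow> complex) \<Rightarrow> complex) \<Rightarrow> 'b" where
  "rel_beta_map X B r = (THE q. continuous_map (rel_beta X B r) B q \<and>
      (\<forall>x\<in>topspace X. q (rel_i X B r x) = r x) \<and> q \<in> extensional (topspace (rel_beta X B r)))"

definition proper_preimage :: "'a topology \<Rightarrow> 'b topology \<Rightarrow> ('a \<Rightarrow> 'b) \<Rightarrow> bool" where
  "proper_preimage S T f \<longleftrightarrow> (\<forall>K. compactin T K \<longrightarrow> compactin S {x \<in> topspace S. f x \<in> K})"

end

theory Submission
  imports Defs
begin


lemma continuous_map_of_real:
  "continuous_map X euclideanreal f \<Longrightarrow> continuous_map X euclidean (\<lambda>x. complex_of_real (f x))"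
  by (simp add: continuous_map_atin tendsto_of_real)

lemma continuous_map_cmult:
  fixes f g :: "_ \<Rightarrow> complex"
  shows "continuous_map X euclidean f \<Longrightarrow> continuous_map X euclidean g \<Longrightarrow> continuous_map X euclidean (\<lambda>x. f x * g x)"
  by (simp add: continuous_map_atin tendsto_mult)

lemma C0_bounded:
  assumes "h \<in> C0 B"
  shows "\<exists>M>0. \<forall>y\<in>topspace B. cmod (h y) \<le> M"
proof -
  have "\<forall>e>0. \<exists>K. compactin B K \<and> (\<forall>y\<in>topspace B - K. cmod (h y) < e)"
    using assms unfolding C0_def by auto
  from this[rule_format, OF zero_less_one] obtain K where K: "compactin B K" "\<forall>y\<in>topspace B - K. cmod (h y) < 1"
    by blast
  have cm: "continuous_map B euclidean h" using assms unfolding C0_def by auto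
  have "compactin euclidean (h ` K)" using image_compactin[OF K(1) cm] .
  then have "compact (h ` K)" by (simp add: compactin_euclidean_iff)
  then have "bounded (h ` K)" by (rule compact_imp_bounded)
  then obtain M where M: "\<forall>z\<in>h ` K. norm z \<le> M" unfolding bounded_iff by blast
  have "\<forall>y\<in>topspace B. cmod (h y) \<le> max M 1 + 1"
  proof
    fix y assume y: "y \<in> topspace B"
    show "cmod (h y) \<le> max M 1 + 1"
    proof (cases "y \<in> K")
      case True then show ?thesis using M by fastforce
    next
      case False
      then have "cmod (h y) < 1" using K(2) y by blast
      then show ?thesis by linarith
    qed
  qed
  then show ?thesis by (intro exI[of _ "max M 1 + 1"]) auto
qed
lemma C0_urysohn:
  assumes "locally_compact_space B" "Hausdorff_space B" "openin B V" "b \<in> V"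
  shows "\<exists>h\<in>C0 B. h b = 1 \<and> (\<forall>y\<in>topspace B - V. h y = 0)"
proof -
  have reg: "regular_space B" using assms locally_compact_Hausdorff_imp_regular_space by blast
  have "neighbourhood_base_of (compactin B) B"
    using locally_compact_imp_neighbourhood_base[OF assms(1) reg] .
  then obtain U K where UK: "openin B U" "compactin B K" "b \<in> U" "U \<subseteq> K" "K \<subseteq> V"
    using assms(3,4) unfolding neighbourhood_base_of by metis
  have cr: "completely_regular_space B"
    using locally_compact_regular_imp_completely_regular_space assms(1,2) by blast
  have bt: "b \<in> topspace B" using UK openin_subset by blast
  obtain f :: "_ \<Rightarrow> real" where f: "continuous_map B (top_of_set {0..1}) f" "f b = 0"
    "f ` (topspace B - U) \<subseteq> {1}"
    using cr UK(1,3) bt unfolding completely_regular_space_def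
    by (metis Diff_iff closedin_diff closedin_topspace)
  define h where "h y = complex_of_real (1 - f y)" for y
  have cf: "continuous_map B euclideanreal f"
    using f(1) continuous_map_in_subtopology by blast
  have "continuous_map B euclidean h"
    unfolding h_def
    by (intro continuous_map_of_real continuous_map_diff cf) auto
  moreover have "\<forall>y\<in>topspace B - U. h y = 0" using f(3) by (auto simp: h_def)
  moreover have "\<forall>y\<in>topspace B - K. cmod (h y) < e" if "e > 0" for e
  proof
    fix y assume "y \<in> topspace B - K"
    then have "y \<in> topspace B - U" using UK by blast
    then have "h y = 0" using \<open>\<forall>y\<in>topspace B - U. h y = 0\<close> by blast
    then show "cmod (h y) < e" using that by simp
  qed
  ultimately have "h \<in> C0 B"
    unfolding C0_def using UK by blast
  moreover have "h b = 1" using f(2) by (simp add: h_def)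
  moreover have "\<forall>y\<in>topspace B - V. h y = 0" using UK \<open>\<forall>y\<in>topspace B - U. h y = 0\<close> by blast
  ultimately show ?thesis by blast
qed



definition gens :: "'a topology \<Rightarrow> 'b topology \<Rightarrow> ('a \<Rightarrow> 'b) \<Rightarrow> ('a \<Rightarrow> complex) set" where
  "gens X B r = {(\<lambda>x. g' x * h (r x)) | g' h. g' \<in> Cb X \<and> h \<in> C0 B}"

lemma gensI: "g' \<in> Cb X \<Longrightarrow> h \<in> C0 B \<Longrightarrow> (\<lambda>x. g' x * h (r x)) \<in> gens X B r"
  unfolding gens_def by blast

lemma cm_in: "continuous_map X Y f \<Longrightarrow> x \<in> topspace X \<Longrightarrow> f x \<in> topspace Y"
  using continuous_map_funspace by blast

lemma HX_alt: "HX X B r = {g \<in> Cb X. \<forall>e>0. \<exists>p\<in>lin_span (gens X B r). \<forall>x\<in>topspace X. cmod (g x - p x) < e}"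
  by (simp add: HX_def gens_def)

lemma C0_vanish: "h \<in> C0 B \<Longrightarrow> e > 0 \<Longrightarrow> \<exists>K. compactin B K \<and> (\<forall>y\<in>topspace B - K. cmod (h y) < e)"
  unfolding C0_def by blast

lemma HX_approx: "a \<in> HX X B r \<Longrightarrow> e > 0 \<Longrightarrow> \<exists>p\<in>lin_span (gens X B r). \<forall>x\<in>topspace X. cmod (a x - p x) < e"
  unfolding HX_alt by blast

lemma Cb_iff: "g \<in> Cb X \<longleftrightarrow> continuous_map X euclidean g \<and> (\<exists>M. \<forall>x\<in>topspace X. cmod (g x) \<le> M) \<and>
   (\<forall>x. x \<notin> topspace X \<longrightarrow> g x = 0)"
  unfolding Cb_def bounded_iff by auto

lemma Cb_bound: "g \<in> Cb X \<Longrightarrow> \<exists>M>0. \<forall>x\<in>topspace X. cmod (g x) \<le> M"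
proof -
  assume "g \<in> Cb X"
  then obtain M where M: "\<forall>x\<in>topspace X. cmod (g x) \<le> M" unfolding Cb_iff by blast
  then have "\<forall>x\<in>topspace X. cmod (g x) \<le> max M 1" by (meson max.coboundedI1)
  then show ?thesis by (intro exI[of _ "max M 1"]) auto
qed

lemma Cb_mult: assumes "g \<in> Cb X" "k \<in> Cb X" shows "(\<lambda>x. g x * k x) \<in> Cb X"
proof -
  obtain M1 where M1: "M1 > 0" "\<forall>x\<in>topspace X. cmod (g x) \<le> M1" using Cb_bound[OF assms(1)] by blast
  obtain M2 where M2: "M2 > 0" "\<forall>x\<in>topspace X. cmod (k x) \<le> M2" using Cb_bound[OF assms(2)] by blast
  have "\<forall>x\<in>topspace X. cmod (g x * k x) \<le> M1 * M2"
    using M1 M2 by (simp add: norm_mult mult_mono')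
  moreover have "continuous_map X euclidean (\<lambda>x. g x * k x)"
    using assms unfolding Cb_iff by (blast intro: continuous_map_cmult)
  moreover have "\<forall>x. x \<notin> topspace X \<longrightarrow> g x * k x = 0" using assms unfolding Cb_iff by auto
  ultimately show ?thesis unfolding Cb_iff by blast
qed

lemma restrict_Cb:
  assumes "continuous_map X euclidean k" "\<forall>x\<in>topspace X. cmod (k x) \<le> M"
  shows "(\<lambda>x. if x \<in> topspace X then k x else 0) \<in> Cb X"
proof -
  have "continuous_map X euclidean (\<lambda>x. if x \<in> topspace X then k x else 0)"
    using assms(1) by (rule continuous_map_eq) auto
  then show ?thesis unfolding Cb_iff using assms(2) by (auto intro!: exI[of _ M])
qed

lemma span_mult:
  assumes "p \<in> lin_span (gens X B r)" "k \<in> Cb X"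
  shows "(\<lambda>x. p x * k x) \<in> lin_span (gens X B r)"
  using assms(1)
proof induction
  case zero
  then show ?case by (simp add: lin_span.zero)
next
  case (base g)
  then obtain g' h where gh: "g = (\<lambda>x. g' x * h (r x))" "g' \<in> Cb X" "h \<in> C0 B"
    unfolding gens_def by blast
  have "(\<lambda>x. g x * k x) = (\<lambda>x. (g' x * k x) * h (r x))" using gh by (auto simp: fun_eq_iff ac_simps)
  moreover have "(\<lambda>x. (g' x * k x) * h (r x)) \<in> gens X B r"
    using gensI[OF Cb_mult[OF gh(2) assms(2)] gh(3)] by simp
  ultimately show ?case by (simp add: lin_span.base)
next
  case (add g k')
  have "(\<lambda>x. (g x + k' x) * k x) = (\<lambda>x. g x * k x + k' x * k x)" by (simp add: fun_eq_iff distrib_right)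
  then show ?case using add by (simp add: lin_span.add)
next
  case (smult g c)
  have "(\<lambda>x. (c * g x) * k x) = (\<lambda>x. c * (g x * k x))" by (simp add: fun_eq_iff ac_simps)
  then show ?case using smult by (simp add: lin_span.smult)
qed

lemma HX_Cb: "a \<in> HX X B r \<Longrightarrow> a \<in> Cb X"
  unfolding HX_def by blast

lemma HX_mult:
  assumes "a \<in> HX X B r" "continuous_map X euclidean k" "\<forall>x\<in>topspace X. cmod (k x) \<le> M"
  shows "(\<lambda>x. a x * k x) \<in> HX X B r"
proof -
  define k' where "k' = (\<lambda>x. if x \<in> topspace X then k x else 0)"
  have k'Cb: "k' \<in> Cb X" unfolding k'_def using restrict_Cb[OF assms(2,3)] .
  have aCb: "a \<in> Cb X" using assms(1) by (rule HX_Cb)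
  have ak: "(\<lambda>x. a x * k' x) = (\<lambda>x. a x * k x)"
    using aCb unfolding Cb_iff k'_def by (auto simp: fun_eq_iff)
  have Cb1: "(\<lambda>x. a x * k x) \<in> Cb X" using Cb_mult[OF aCb k'Cb] ak by simp
  define M' where "M' = max M 1"
  have M'pos: "M' > 0" unfolding M'_def by simp
  have kM': "\<forall>x\<in>topspace X. cmod (k x) \<le> M'" using assms(3) unfolding M'_def by (meson max.coboundedI1)
  have "\<exists>p\<in>lin_span (gens X B r). \<forall>x\<in>topspace X. cmod (a x * k x - p x) < e" if e: "e > 0" for e
  proof -
    obtain p where p: "p \<in> lin_span (gens X B r)" "\<forall>x\<in>topspace X. cmod (a x - p x) < e / M'"
      using HX_approx[OF assms(1), of "e / M'"] e M'pos by auto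
    have "\<forall>x\<in>topspace X. cmod (a x * k x - p x * k' x) < e"
    proof
      fix x assume x: "x \<in> topspace X"
      have "cmod (a x * k x - p x * k' x) = cmod (a x - p x) * cmod (k x)"
        using x by (simp add: k'_def left_diff_distrib[symmetric] norm_mult)
      also have "\<dots> \<le> cmod (a x - p x) * M'" using kM' x by (simp add: mult_left_mono)
      also have "\<dots> < (e / M') * M'"
        using mult_strict_right_mono[OF bspec[OF p(2) x] M'pos] .
      also have "\<dots> = e" using M'pos by simp
      finally show "cmod (a x * k x - p x * k' x) < e" .
    qed
    then show ?thesis
      by (intro bexI[of _ "\<lambda>x. p x * k' x"]) (use span_mult[OF p(1) k'Cb] in simp_all)
  qed
  then show ?thesis using Cb1 unfolding HX_alt by blast
qed

lemma Cb_add: assumes "g \<in> Cb X" "k \<in> Cb X" shows "(\<lambda>x. g x + k x) \<in> Cb X"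
proof -
  obtain M1 where M1: "M1 > 0" "\<forall>x\<in>topspace X. cmod (g x) \<le> M1" using Cb_bound[OF assms(1)] by blast
  obtain M2 where M2: "M2 > 0" "\<forall>x\<in>topspace X. cmod (k x) \<le> M2" using Cb_bound[OF assms(2)] by blast
  have "\<forall>x\<in>topspace X. cmod (g x + k x) \<le> M1 + M2"
    using M1 M2 by (meson add_mono norm_triangle_le)
  moreover have "continuous_map X euclidean (\<lambda>x. g x + k x)"
    using assms unfolding Cb_iff by (blast intro: continuous_map_add)
  moreover have "\<forall>x. x \<notin> topspace X \<longrightarrow> g x + k x = 0" using assms unfolding Cb_iff by auto
  ultimately show ?thesis unfolding Cb_iff by blast
qed

lemma HX_add:
  assumes "a \<in> HX X B r" "b \<in> HX X B r"
  shows "(\<lambda>x. a x + b x) \<in> HX X B r"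
proof -
  have Cb1: "(\<lambda>x. a x + b x) \<in> Cb X" using Cb_add[OF HX_Cb[OF assms(1)] HX_Cb[OF assms(2)]] .
  have "\<exists>p\<in>lin_span (gens X B r). \<forall>x\<in>topspace X. cmod (a x + b x - p x) < e" if e: "e > 0" for e
  proof -
    obtain p where p: "p \<in> lin_span (gens X B r)" "\<forall>x\<in>topspace X. cmod (a x - p x) < e / 2"
      using HX_approx[OF assms(1), of "e / 2"] e by auto
    obtain q where q: "q \<in> lin_span (gens X B r)" "\<forall>x\<in>topspace X. cmod (b x - q x) < e / 2"
      using HX_approx[OF assms(2), of "e / 2"] e by auto
    have "\<forall>x\<in>topspace X. cmod (a x + b x - (p x + q x)) < e"
    proof
      fix x assume x: "x \<in> topspace X"
      have "cmod (a x + b x - (p x + q x)) \<le> cmod (a x - p x) + cmod (b x - q x)"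
        by (metis add_diff_add norm_triangle_ineq)
      then show "cmod (a x + b x - (p x + q x)) < e" using p(2) q(2) x by fastforce
    qed
    then show ?thesis
      by (intro bexI[of _ "\<lambda>x. p x + q x"]) (use lin_span.add[OF p(1) q(1)] in simp_all)
  qed
  then show ?thesis using Cb1 unfolding HX_alt by blast
qed

lemma HX_zero: "(\<lambda>x. 0) \<in> HX X B r"
  unfolding HX_alt Cb_iff by (auto intro!: bexI[of _ "\<lambda>x. 0"] lin_span.zero)

lemma HX_prod:
  assumes "a \<in> HX X B r" "b \<in> HX X B r"
  shows "(\<lambda>x. a x * b x) \<in> HX X B r"
proof -
  obtain M where "\<forall>x\<in>topspace X. cmod (b x) \<le> M" using Cb_bound[OF HX_Cb[OF assms(2)]] by blast
  moreover have "continuous_map X euclidean b" using HX_Cb[OF assms(2)] unfolding Cb_iff by blast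
  ultimately show ?thesis using HX_mult[OF assms(1)] by blast
qed

lemma HX_scale:
  assumes "a \<in> HX X B r"
  shows "(\<lambda>x. c * a x) \<in> HX X B r"
proof -
  have "(\<lambda>x. a x * c) \<in> HX X B r" using HX_mult[OF assms, of "\<lambda>x. c" "cmod c"] by simp
  then show ?thesis by (simp add: mult.commute)
qed

lemma gen_in_HX:
  assumes "continuous_map X B r" "h \<in> C0 B"
  shows "(\<lambda>x. if x \<in> topspace X then h (r x) else 0) \<in> HX X B r"
proof -
  obtain M where M: "M > 0" "\<forall>y\<in>topspace B. cmod (h y) \<le> M" using C0_bounded[OF assms(2)] by blast
  have hc: "continuous_map B euclidean h" using assms(2) unfolding C0_def by blast
  have ch: "continuous_map X euclidean (\<lambda>x. h (r x))"
    using continuous_map_compose[OF assms(1) hc] unfolding o_def .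
  have bd: "\<forall>x\<in>topspace X. cmod (h (r x)) \<le> M" using M(2) cm_in[OF assms(1)] by blast
  have Cb1: "(\<lambda>x. if x \<in> topspace X then h (r x) else 0) \<in> Cb X"
    using restrict_Cb[OF ch bd] .
  have one: "(\<lambda>x. if x \<in> topspace X then 1 else 0) \<in> Cb X"
    using restrict_Cb[of X "\<lambda>x. 1" 1] by simp
  have eq: "(\<lambda>x. if x \<in> topspace X then h (r x) else 0) = (\<lambda>x. (if x \<in> topspace X then 1 else 0) * h (r x))"
    by (auto simp: fun_eq_iff)
  have "(\<lambda>x. if x \<in> topspace X then h (r x) else 0) \<in> lin_span (gens X B r)"
    unfolding eq using gensI[OF one assms(2)] by (rule lin_span.base)
  then show ?thesis using Cb1 unfolding HX_alt by (auto intro!: bexI[of _ "\<lambda>x. if x \<in> topspace X then h (r x) else 0"])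
qed

lemma span_vanish:
  assumes "p \<in> lin_span (gens X B r)" "continuous_map X B r"
  shows "\<forall>e>0. \<exists>K. compactin B K \<and> (\<forall>x\<in>topspace X. r x \<notin> K \<longrightarrow> cmod (p x) < e)"
  using assms(1)
proof induction
  case zero
  then show ?case by (auto intro!: exI[of _ "{}"])
next
  case (base g)
  then obtain g' h where gh: "g = (\<lambda>x. g' x * h (r x))" "g' \<in> Cb X" "h \<in> C0 B"
    unfolding gens_def by blast
  obtain M where M: "M > 0" "\<forall>x\<in>topspace X. cmod (g' x) \<le> M" using Cb_bound[OF gh(2)] by blast
  show ?case
  proof (intro allI impI)
    fix e :: real assume e: "e > 0"
    then obtain K where K: "compactin B K" "\<forall>y\<in>topspace B - K. cmod (h y) < e / M"
      using C0_vanish[OF gh(3), of "e / M"] M(1) by auto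
    have "\<forall>x\<in>topspace X. r x \<notin> K \<longrightarrow> cmod (g x) < e"
    proof (intro ballI impI)
      fix x assume x: "x \<in> topspace X" "r x \<notin> K"
      have rx: "r x \<in> topspace B" using cm_in[OF assms(2) x(1)] .
      have "cmod (g x) = cmod (g' x) * cmod (h (r x))" using gh(1) by (simp add: norm_mult)
      also have "\<dots> \<le> M * cmod (h (r x))" using M(2) x(1) by (simp add: mult_right_mono)
      also have "\<dots> < M * (e / M)"
      proof -
        have "cmod (h (r x)) < e / M" using K(2) rx x(2) by blast
        then show ?thesis using mult_strict_left_mono M(1) by blast
      qed
      also have "\<dots> = e" using M(1) by simp
      finally show "cmod (g x) < e" .
    qed
    then show "\<exists>K. compactin B K \<and> (\<forall>x\<in>topspace X. r x \<notin> K \<longrightarrow> cmod (g x) < e)" using K(1) by blast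
  qed
next
  case (add g k)
  show ?case
  proof (intro allI impI)
    fix e :: real assume e: "e > 0"
    obtain K1 where K1: "compactin B K1" "\<forall>x\<in>topspace X. r x \<notin> K1 \<longrightarrow> cmod (g x) < e/2"
      using add.IH(1) e half_gt_zero by blast
    obtain K2 where K2: "compactin B K2" "\<forall>x\<in>topspace X. r x \<notin> K2 \<longrightarrow> cmod (k x) < e/2"
      using add.IH(2) e half_gt_zero by blast
    have "\<forall>x\<in>topspace X. r x \<notin> K1 \<union> K2 \<longrightarrow> cmod (g x + k x) < e"
    proof (intro ballI impI)
      fix x assume x: "x \<in> topspace X" "r x \<notin> K1 \<union> K2"
      have "cmod (g x + k x) \<le> cmod (g x) + cmod (k x)" by (rule norm_triangle_ineq)
      then show "cmod (g x + k x) < e" using K1(2) K2(2) x by fastforce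
    qed
    then show "\<exists>K. compactin B K \<and> (\<forall>x\<in>topspace X. r x \<notin> K \<longrightarrow> cmod (g x + k x) < e)"
      using compactin_Un[OF K1(1) K2(1)] by blast
  qed
next
  case (smult g c)
  show ?case
  proof (intro allI impI)
    fix e :: real assume e: "e > 0"
    have cp: "cmod c + 1 > 0" by (simp add: add_nonneg_pos)
    obtain K where K: "compactin B K" "\<forall>x\<in>topspace X. r x \<notin> K \<longrightarrow> cmod (g x) < e / (cmod c + 1)"
      using smult.IH e cp divide_pos_pos by blast
    have "\<forall>x\<in>topspace X. r x \<notin> K \<longrightarrow> cmod (c * g x) < e"
    proof (intro ballI impI)
      fix x assume x: "x \<in> topspace X" "r x \<notin> K"
      have "cmod (c * g x) = cmod c * cmod (g x)" by (simp add: norm_mult)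
      also have "\<dots> \<le> (cmod c + 1) * cmod (g x)" by (simp add: mult_right_mono)
      also have "\<dots> < (cmod c + 1) * (e / (cmod c + 1))"
      proof -
        have "cmod (g x) < e / (cmod c + 1)" using K(2) x by blast
        then show ?thesis using mult_strict_left_mono cp by blast
      qed
      also have "\<dots> = e" using cp by simp
      finally show "cmod (c * g x) < e" .
    qed
    then show "\<exists>K. compactin B K \<and> (\<forall>x\<in>topspace X. r x \<notin> K \<longrightarrow> cmod (c * g x) < e)" using K(1) by blast
  qed
qed

lemma HX_vanish:
  assumes "a \<in> HX X B r" "continuous_map X B r" "e > 0"
  shows "\<exists>K. compactin B K \<and> (\<forall>x\<in>topspace X. r x \<notin> K \<longrightarrow> cmod (a x) < e)"
proof -
  obtain p where p: "p \<in> lin_span (gens X B r)" "\<forall>x\<in>topspace X. cmod (a x - p x) < e / 2"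
    using HX_approx[OF assms(1), of "e / 2"] assms(3) by auto
  obtain K where K: "compactin B K" "\<forall>x\<in>topspace X. r x \<notin> K \<longrightarrow> cmod (p x) < e/2"
    using span_vanish[OF p(1) assms(2)] assms(3) half_gt_zero by blast
  have "\<forall>x\<in>topspace X. r x \<notin> K \<longrightarrow> cmod (a x) < e"
  proof (intro ballI impI)
    fix x assume x: "x \<in> topspace X" "r x \<notin> K"
    have "cmod (a x) \<le> cmod (a x - p x) + cmod (p x)" by (metis diff_add_cancel norm_triangle_ineq)
    then show "cmod (a x) < e" using p(2) K(2) x by fastforce
  qed
  then show ?thesis using K(1) by blast
qed



lemma continuous_map_cnj:
  "continuous_map X euclidean f \<Longrightarrow> continuous_map X euclidean (\<lambda>x. cnj (f x))"
  by (simp add: continuous_map_atin tendsto_cnj)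

lemma continuous_map_cdivide:
  fixes f g :: "_ \<Rightarrow> complex"
  shows "continuous_map X euclidean f \<Longrightarrow> continuous_map X euclidean g \<Longrightarrow> (\<And>x. x \<in> topspace X \<Longrightarrow> g x \<noteq> 0)
    \<Longrightarrow> continuous_map X euclidean (\<lambda>x. f x / g x)"
  by (simp add: continuous_map_atin tendsto_divide)

lemma chr_add: "\<phi> \<in> characters A \<Longrightarrow> a \<in> A \<Longrightarrow> b \<in> A \<Longrightarrow> \<phi> (\<lambda>x. a x + b x) = \<phi> a + \<phi> b"
  unfolding characters_def by blast

lemma chr_mult: "\<phi> \<in> characters A \<Longrightarrow> a \<in> A \<Longrightarrow> b \<in> A \<Longrightarrow> \<phi> (\<lambda>x. a x * b x) = \<phi> a * \<phi> b"
  unfolding characters_def by blast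

lemma chr_scale: "\<phi> \<in> characters A \<Longrightarrow> a \<in> A \<Longrightarrow> \<phi> (\<lambda>x. c * a x) = c * \<phi> a"
  unfolding characters_def by blast

lemma chr_nz: "\<phi> \<in> characters A \<Longrightarrow> \<exists>a\<in>A. \<phi> a \<noteq> 0"
  unfolding characters_def by blast

lemma chr_ext: "\<phi> \<in> characters A \<Longrightarrow> \<phi> \<in> extensional A"
  unfolding characters_def by blast

lemma chr_unit:
  assumes "\<phi> \<in> characters (HX X B r)"
  shows "\<exists>u\<in>HX X B r. \<phi> u = 1"
proof -
  obtain a where a: "a \<in> HX X B r" "\<phi> a \<noteq> 0" using chr_nz[OF assms] by blast
  have "(\<lambda>x. (1 / \<phi> a) * a x) \<in> HX X B r" using HX_scale[OF a(1)] .
  moreover have "\<phi> (\<lambda>x. (1 / \<phi> a) * a x) = 1" using chr_scale[OF assms a(1), of "1 / \<phi> a"] a(2) by simp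
  ultimately show ?thesis by blast
qed

lemma chr_sum:
  assumes "\<phi> \<in> characters (HX X B r)" "finite F" "\<forall>i\<in>F. t i \<in> HX X B r"
  shows "(\<lambda>x. \<Sum>i\<in>F. t i x) \<in> HX X B r \<and> \<phi> (\<lambda>x. \<Sum>i\<in>F. t i x) = (\<Sum>i\<in>F. \<phi> (t i))"
  using assms(2,3)
proof (induction F rule: finite_induct)
  case empty
  obtain a where a: "a \<in> HX X B r" using chr_nz[OF assms(1)] by blast
  have "\<phi> (\<lambda>x. 0 * a x) = 0 * \<phi> a" using chr_scale[OF assms(1) a] .
  then show ?case using HX_zero by simp
next
  case (insert j F)
  have tj: "t j \<in> HX X B r" using insert by simp
  have IH: "(\<lambda>x. \<Sum>i\<in>F. t i x) \<in> HX X B r" "\<phi> (\<lambda>x. \<Sum>i\<in>F. t i x) = (\<Sum>i\<in>F. \<phi> (t i))"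
    using insert by auto
  have eq: "(\<lambda>x. \<Sum>i\<in>insert j F. t i x) = (\<lambda>x. t j x + (\<lambda>x. \<Sum>i\<in>F. t i x) x)"
    using insert(1,2) by simp
  show ?case unfolding eq
    using HX_add[OF tj IH(1)] chr_add[OF assms(1) tj IH(1)] IH(2) insert(1,2) by simp
qed


lemma joint:
  assumes phi: "\<phi> \<in> characters (HX X B r)" and F: "finite F" "F \<subseteq> HX X B r" and e: "e > 0"
  shows "\<exists>x\<in>topspace X. \<forall>g\<in>F. cmod (g x - \<phi> g) < e"
proof (rule ccontr)
  assume neg: "\<not> ?thesis"
  obtain u where u: "u \<in> HX X B r" "\<phi> u = 1" using chr_unit[OF phi] by blast
  define F' where "F' = insert u F"
  have F': "finite F'" "F' \<subseteq> HX X B r" "u \<in> F'" using F u unfolding F'_def by auto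
  define D where "D x = (\<Sum>g\<in>F'. (cmod (g x - \<phi> g))\<^sup>2)" for x
  have Dge: "D x \<ge> e\<^sup>2" if x: "x \<in> topspace X" for x
  proof -
    obtain g where g: "g \<in> F" "\<not> cmod (g x - \<phi> g) < e" using neg x by blast
    have "e\<^sup>2 \<le> (cmod (g x - \<phi> g))\<^sup>2" using g(2) e by (simp add: power_mono)
    also have "\<dots> \<le> D x" unfolding D_def
      by (rule member_le_sum) (use g(1) F'(1) in \<open>auto simp: F'_def\<close>)
    finally show ?thesis .
  qed
  have Dpos: "D x > 0" if "x \<in> topspace X" for x
    using Dge[OF that] e by (meson less_le_trans zero_less_power)
  have gcont: "continuous_map X euclidean g" if "g \<in> F'" for g
    using HX_Cb F'(2) that unfolding Cb_iff by blast
  have Dcont: "continuous_map X euclidean (\<lambda>x. complex_of_real (D x))"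
    unfolding D_def
    by (intro continuous_map_of_real continuous_map_sum F'(1) continuous_map_real_pow continuous_map_norm
        continuous_map_diff[OF gcont continuous_map_canonical_const])
  define k where "k g x = cnj (g x - \<phi> g) / complex_of_real (D x)" for g x
  define w where "w g x = u x * k g x" for g x
  define t where "t g x = g x * w g x + (- \<phi> g) * w g x" for g x
  have wHX: "w g \<in> HX X B r" if g: "g \<in> F'" for g
  proof -
    obtain M where M: "M > 0" "\<forall>x\<in>topspace X. cmod (g x) \<le> M"
      using Cb_bound HX_Cb F'(2) g by blast
    have gc: "continuous_map X euclidean g" using gcont g .
    have kc: "continuous_map X euclidean (k g)"
      unfolding k_def
    proof (rule continuous_map_cdivide[OF continuous_map_cnj[OF continuous_map_diff[OF gc continuous_map_canonical_const]] Dcont])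
      fix x assume "x \<in> topspace X"
      then show "complex_of_real (D x) \<noteq> 0" using Dpos by force
    qed
    have kb: "\<forall>x\<in>topspace X. cmod (k g x) \<le> (M + cmod (\<phi> g)) / e\<^sup>2"
    proof
      fix x assume x: "x \<in> topspace X"
      have "cmod (k g x) = cmod (g x - \<phi> g) / D x"
        using Dpos[OF x] by (simp add: k_def norm_divide complex_cnj_diff[symmetric] del: complex_cnj_diff)
      also have "\<dots> \<le> (M + cmod (\<phi> g)) / D x"
        using Dpos[OF x] M(2) x by (intro divide_right_mono) (auto intro: order.trans[OF norm_triangle_ineq4])
      also have "\<dots> \<le> (M + cmod (\<phi> g)) / e\<^sup>2"
        using Dge[OF x] e M(1) Dpos[OF x] by (intro divide_left_mono) (auto intro: add_pos_nonneg)
      finally show "cmod (k g x) \<le> (M + cmod (\<phi> g)) / e\<^sup>2" .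
    qed
    show ?thesis unfolding w_def using HX_mult[OF u(1) kc kb] .
  qed
  have tHX: "t g \<in> HX X B r" and tphi: "\<phi> (t g) = 0" if g: "g \<in> F'" for g
  proof -
    have gA: "g \<in> HX X B r" using F'(2) g by blast
    have a1: "(\<lambda>x. g x * w g x) \<in> HX X B r" using HX_prod[OF gA wHX[OF g]] .
    have a2: "(\<lambda>x. (- \<phi> g) * w g x) \<in> HX X B r" using HX_scale[OF wHX[OF g]] .
    have teq: "t g = (\<lambda>x. (\<lambda>x. g x * w g x) x + (\<lambda>x. (- \<phi> g) * w g x) x)"
      unfolding t_def by simp
    show "t g \<in> HX X B r" unfolding teq using HX_add[OF a1 a2] .
    have "\<phi> (t g) = \<phi> (\<lambda>x. g x * w g x) + \<phi> (\<lambda>x. (- \<phi> g) * w g x)"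
      unfolding teq by (rule chr_add[OF phi a1 a2])
    also have "\<dots> = \<phi> g * \<phi> (w g) + (- \<phi> g) * \<phi> (w g)"
      by (simp only: chr_mult[OF phi gA wHX[OF g]] chr_scale[OF phi wHX[OF g]])
    finally show "\<phi> (t g) = 0" by simp
  qed
  have sumeq: "(\<lambda>x. \<Sum>g\<in>F'. t g x) = u"
  proof
    fix x
    show "(\<Sum>g\<in>F'. t g x) = u x"
    proof (cases "x \<in> topspace X")
      case True
      have "t g x = u x * complex_of_real ((cmod (g x - \<phi> g))\<^sup>2) / complex_of_real (D x)" for g
      proof -
        have "t g x = (g x - \<phi> g) * w g x" unfolding t_def by (simp add: algebra_simps)
        also have "\<dots> = u x * ((g x - \<phi> g) * cnj (g x - \<phi> g)) / complex_of_real (D x)"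
          unfolding w_def k_def by (simp only: times_divide_eq_right mult_ac)
        also have "\<dots> = u x * complex_of_real ((cmod (g x - \<phi> g))\<^sup>2) / complex_of_real (D x)"
          by (simp only: complex_norm_square)
        finally show ?thesis .
      qed
      then have "(\<Sum>g\<in>F'. t g x) = u x * complex_of_real (D x) / complex_of_real (D x)"
        unfolding D_def by (simp add: sum_divide_distrib[symmetric] sum_distrib_left[symmetric])
      also have "\<dots> = u x" using Dpos[OF True] by simp
      finally show ?thesis .
    next
      case False
      then have "u x = 0" using HX_Cb[OF u(1)] unfolding Cb_iff by blast
      then show ?thesis using False by (simp add: t_def w_def)
    qed
  qed
  have "\<phi> (\<lambda>x. \<Sum>g\<in>F'. t g x) = (\<Sum>g\<in>F'. \<phi> (t g))"
    using chr_sum[OF phi F'(1)] tHX by blast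
  also have "\<dots> = 0" using tphi by simp
  finally have "\<phi> u = 0" unfolding sumeq .
  then show False using u(2) by simp
qed



lemma chr_PiE: "x \<in> characters A \<Longrightarrow> x \<in> PiE A (\<lambda>_. UNIV)"
  using chr_ext[of x A] unfolding PiE_def by blast

lemma topspace_beta: "topspace (rel_beta X B r) = characters (HX X B r)"
  unfolding rel_beta_def spectrum_top_def topspace_subtopology topspace_product_topology
  by (simp only: topspace_euclidean) (blast dest: chr_PiE)

lemma proj_cont: "g \<in> HX X B r \<Longrightarrow> continuous_map (rel_beta X B r) euclidean (\<lambda>\<psi>. \<psi> g)"
  unfolding rel_beta_def spectrum_top_def
  by (rule continuous_map_from_subtopology[OF continuous_map_product_projection])

lemma i_char:
  assumes r: "continuous_map X B r" and lc: "locally_compact_space B" "Hausdorff_space B"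
    and x: "x \<in> topspace X"
  shows "rel_i X B r x \<in> characters (HX X B r)"
proof -
  let ?A = "HX X B r"
  have rx: "r x \<in> topspace B" using cm_in[OF r x] .
  obtain h where h: "h \<in> C0 B" "h (r x) = 1"
    using C0_urysohn[OF lc openin_topspace rx] by blast
  have gA: "(\<lambda>y. if y \<in> topspace X then h (r y) else 0) \<in> ?A" using gen_in_HX[OF r h(1)] .
  have nz: "\<exists>a\<in>?A. rel_i X B r x a \<noteq> 0"
    using gA h(2) x by (intro bexI[OF _ gA]) (simp add: rel_i_def)
  show ?thesis
    unfolding characters_def
  proof (intro CollectI conjI ballI allI)
    show "rel_i X B r x \<in> extensional ?A" unfolding rel_i_def by simp
    show "\<exists>a\<in>?A. rel_i X B r x a \<noteq> 0" using nz .
    fix a b assume ab: "a \<in> ?A" "b \<in> ?A"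
    show "rel_i X B r x (\<lambda>y. a y + b y) = rel_i X B r x a + rel_i X B r x b"
      using HX_add[OF ab] ab by (simp add: rel_i_def)
    show "rel_i X B r x (\<lambda>y. a y * b y) = rel_i X B r x a * rel_i X B r x b"
      using HX_prod[OF ab] ab by (simp add: rel_i_def)
  next
    fix c a assume a: "a \<in> ?A"
    show "rel_i X B r x (\<lambda>y. c * a y) = c * rel_i X B r x a"
      using HX_scale[OF a] a by (simp add: rel_i_def)
  qed
qed

lemma dense_i:
  assumes r: "continuous_map X B r" and lc: "locally_compact_space B" "Hausdorff_space B"
    and phi: "\<phi> \<in> topspace (rel_beta X B r)" and W: "openin (rel_beta X B r) W" "\<phi> \<in> W"
  shows "\<exists>x\<in>topspace X. rel_i X B r x \<in> W"
proof -
  let ?A = "HX X B r"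
  have phic: "\<phi> \<in> characters ?A" using phi topspace_beta by blast
  obtain T where T: "openin (product_topology (\<lambda>_. euclidean) ?A) T" "W = T \<inter> characters ?A"
    using W(1) unfolding rel_beta_def spectrum_top_def openin_subtopology by blast
  have "\<phi> \<in> T" using W(2) T(2) by blast
  then obtain U where U: "finite {g \<in> ?A. U g \<noteq> topspace euclidean}" "\<forall>g\<in>?A. openin euclidean (U g)"
     "\<phi> \<in> PiE ?A U" "PiE ?A U \<subseteq> T"
    using T(1) unfolding openin_product_topology_alt by blast
  define F where "F = {g \<in> ?A. U g \<noteq> UNIV}"
  have F: "finite F" "F \<subseteq> ?A" using U(1) unfolding F_def by auto
  have "\<forall>g\<in>F. \<exists>\<epsilon>>0. ball (\<phi> g) \<epsilon> \<subseteq> U g"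
  proof
    fix g assume g: "g \<in> F"
    have "open (U g)" using U(2) g F(2) by auto
    moreover have "\<phi> g \<in> U g" using U(3) g F(2) by (auto simp: PiE_iff)
    ultimately show "\<exists>\<epsilon>>0. ball (\<phi> g) \<epsilon> \<subseteq> U g" using open_contains_ball by blast
  qed
  then obtain \<epsilon> where eps: "\<forall>g\<in>F. \<epsilon> g > 0 \<and> ball (\<phi> g) (\<epsilon> g) \<subseteq> U g"
    using bchoice[of F "\<lambda>g e. e > 0 \<and> ball (\<phi> g) e \<subseteq> U g"] by blast
  define e where "e = Min (insert 1 (\<epsilon> ` F))"
  have e: "e > 0" unfolding e_def using F(1) eps by (subst Min_gr_iff) auto
  have ele: "e \<le> \<epsilon> g" if "g \<in> F" for g unfolding e_def using F(1) that by (intro Min_le) auto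
  obtain x where x: "x \<in> topspace X" "\<forall>g\<in>F. cmod (g x - \<phi> g) < e"
    using joint[OF phic F e] by blast
  have "rel_i X B r x \<in> PiE ?A U"
  proof (unfold PiE_iff, intro conjI ballI)
    fix g assume g: "g \<in> ?A"
    show "rel_i X B r x g \<in> U g"
    proof (cases "g \<in> F")
      case True
      have "cmod (g x - \<phi> g) < e" using x(2) True by blast
      then have "cmod (g x - \<phi> g) < \<epsilon> g" using ele[OF True] by linarith
      then have "dist (\<phi> g) (g x) < \<epsilon> g" by (simp add: dist_norm norm_minus_commute)
      then have "g x \<in> ball (\<phi> g) (\<epsilon> g)" by simp
      moreover have "ball (\<phi> g) (\<epsilon> g) \<subseteq> U g" using eps True by blast
      ultimately have "g x \<in> U g" by blast
      then show ?thesis using g by (simp add: rel_i_def)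
    next
      case False
      then show ?thesis using g unfolding F_def by auto
    qed
  next
    show "rel_i X B r x \<in> extensional ?A" unfolding rel_i_def by simp
  qed
  then have "rel_i X B r x \<in> T" using U(4) by blast
  then show ?thesis using i_char[OF r lc x(1)] T(2) x(1) by blast
qed

lemma eq_on_dense:
  assumes p: "continuous_map S T p" and q: "continuous_map S T q" and H: "Hausdorff_space T"
    and dense: "\<And>s W. s \<in> topspace S \<Longrightarrow> openin S W \<Longrightarrow> s \<in> W \<Longrightarrow> \<exists>d\<in>D. d \<in> W"
    and eq: "\<forall>d\<in>D. p d = q d"
  shows "\<forall>s\<in>topspace S. p s = q s"
proof (rule ccontr)
  assume "\<not> ?thesis"
  then obtain s where s: "s \<in> topspace S" "p s \<noteq> q s" by blast
  have "p s \<in> topspace T" "q s \<in> topspace T" using cm_in[OF p s(1)] cm_in[OF q s(1)] by auto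
  then obtain U V where UV: "openin T U" "openin T V" "p s \<in> U" "q s \<in> V" "disjnt U V"
    using H s(2) unfolding Hausdorff_space_def by blast
  define W where "W = {x \<in> topspace S. p x \<in> U} \<inter> {x \<in> topspace S. q x \<in> V}"
  have oW: "openin S W" unfolding W_def
    by (rule openin_Int[OF openin_continuous_map_preimage[OF p UV(1)] openin_continuous_map_preimage[OF q UV(2)]])
  have sW: "s \<in> W" unfolding W_def using s(1) UV(3,4) by blast
  obtain d where d: "d \<in> D" "d \<in> W" using dense[OF s(1) oW sW] by blast
  then have "p d \<in> U" "q d \<in> V" unfolding W_def by auto
  moreover have "p d = q d" using eq d(1) by blast
  ultimately have "p d \<in> U \<inter> V" by simp
  then show False using UV(5) unfolding disjnt_def by blast
qed

definition qprop where
  "qprop X B r \<phi> b \<longleftrightarrow> b \<in> topspace B \<and>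
     (\<forall>v\<in>HX X B r. \<phi> v = 1 \<longrightarrow> (\<forall>h\<in>C0 B. \<phi> (\<lambda>x. v x * h (r x)) = h b))"

lemma mulh_HX:
  assumes r: "continuous_map X B r" and v: "v \<in> HX X B r" and h: "h \<in> C0 B"
  shows "(\<lambda>x. v x * h (r x)) \<in> HX X B r"
proof -
  obtain M where M: "M > 0" "\<forall>y\<in>topspace B. cmod (h y) \<le> M" using C0_bounded[OF h] by blast
  have hc: "continuous_map B euclidean h" using h unfolding C0_def by blast
  have ch: "continuous_map X euclidean (\<lambda>x. h (r x))"
    using continuous_map_compose[OF r hc] unfolding o_def .
  have bd: "\<forall>x\<in>topspace X. cmod (h (r x)) \<le> M" using M(2) cm_in[OF r] by blast
  show ?thesis using HX_mult[OF v ch bd] .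
qed

lemma q_indep:
  assumes r: "continuous_map X B r" and phi: "\<phi> \<in> characters (HX X B r)"
    and u: "u \<in> HX X B r" "\<phi> u = 1" and v: "v \<in> HX X B r" "\<phi> v = 1" and h: "h \<in> C0 B"
  shows "\<phi> (\<lambda>x. u x * h (r x)) = \<phi> (\<lambda>x. v x * h (r x))"
proof -
  have uh: "(\<lambda>x. u x * h (r x)) \<in> HX X B r" using mulh_HX[OF r u(1) h] .
  have vh: "(\<lambda>x. v x * h (r x)) \<in> HX X B r" using mulh_HX[OF r v(1) h] .
  have e1: "\<phi> (\<lambda>x. u x * (v x * h (r x))) = \<phi> u * \<phi> (\<lambda>x. v x * h (r x))"
    using chr_mult[OF phi u(1) vh] .
  have e2: "\<phi> (\<lambda>x. v x * (u x * h (r x))) = \<phi> v * \<phi> (\<lambda>x. u x * h (r x))"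
    using chr_mult[OF phi v(1) uh] .
  have eq: "(\<lambda>x. u x * (v x * h (r x))) = (\<lambda>x. v x * (u x * h (r x)))"
    by (simp add: fun_eq_iff ac_simps)
  have "\<phi> u * \<phi> (\<lambda>x. v x * h (r x)) = \<phi> (\<lambda>x. u x * (v x * h (r x)))" by (rule e1[symmetric])
  also have "\<dots> = \<phi> (\<lambda>x. v x * (u x * h (r x)))" by (simp only: eq)
  also have "\<dots> = \<phi> v * \<phi> (\<lambda>x. u x * h (r x))" by (rule e2)
  finally have "\<phi> u * \<phi> (\<lambda>x. v x * h (r x)) = \<phi> v * \<phi> (\<lambda>x. u x * h (r x))" .
  then show ?thesis using u(2) v(2) by simp
qed

lemma qprop_from_u:
  assumes r: "continuous_map X B r" and phi: "\<phi> \<in> characters (HX X B r)"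
    and u: "u \<in> HX X B r" "\<phi> u = 1" and b: "b \<in> topspace B"
    and H: "\<forall>h\<in>C0 B. \<phi> (\<lambda>x. u x * h (r x)) = h b"
  shows "qprop X B r \<phi> b"
proof -
  have "\<phi> (\<lambda>x. v x * h (r x)) = h b" if v: "v \<in> HX X B r" "\<phi> v = 1" and h: "h \<in> C0 B" for v h
  proof -
    have "\<phi> (\<lambda>x. v x * h (r x)) = \<phi> (\<lambda>x. u x * h (r x))"
      by (rule q_indep[of X B r \<phi> v u h, OF r phi v(1) v(2) u(1) u(2) h])
    also have "\<dots> = h b" by (rule bspec[OF H h])
    finally show ?thesis .
  qed
  then show ?thesis unfolding qprop_def using b by blast
qed

lemma q_unique:
  assumes r: "continuous_map X B r" and lc: "locally_compact_space B" "Hausdorff_space B"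
    and phi: "\<phi> \<in> characters (HX X B r)" and b: "qprop X B r \<phi> b" and b': "qprop X B r \<phi> b'"
  shows "b = b'"
proof (rule ccontr)
  assume ne: "b \<noteq> b'"
  have bt: "b \<in> topspace B" "b' \<in> topspace B" using b b' unfolding qprop_def by auto
  have "closedin B {b'}" using closedin_t1_singleton[OF Hausdorff_imp_t1_space[OF lc(2)] bt(2)] .
  then have op: "openin B (topspace B - {b'})" by (rule openin_diff[OF openin_topspace])
  obtain h where h: "h \<in> C0 B" "h b = 1" "\<forall>y\<in>topspace B - (topspace B - {b'}). h y = 0"
  proof -
    have "b \<in> topspace B - {b'}" using bt ne by blast
    then show ?thesis using C0_urysohn[OF lc op] that by blast
  qed
  have hb': "h b' = 0" using h(3) bt(2) by blast
  obtain u where u: "u \<in> HX X B r" "\<phi> u = 1" using chr_unit[OF phi] by blast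
  have "h b = \<phi> (\<lambda>x. u x * h (r x))" using b u h(1) unfolding qprop_def by simp
  also have "\<dots> = h b'" using b' u h(1) unfolding qprop_def by simp
  finally show False using h(2) hb' by simp
qed



lemma q_exists:
  assumes r: "continuous_map X B r" and lc: "locally_compact_space B" "Hausdorff_space B"
    and phi: "\<phi> \<in> characters (HX X B r)"
  shows "\<exists>b. qprop X B r \<phi> b"
proof (rule ccontr)
  assume nex: "\<not> ?thesis"
  obtain u where u: "u \<in> HX X B r" "\<phi> u = 1" using chr_unit[OF phi] by blast
  obtain K where K: "compactin B K" "\<forall>x\<in>topspace X. r x \<notin> K \<longrightarrow> cmod (u x) < 1/2"
    using HX_vanish[OF u(1) r, of "1/2"] by auto
  have Ksub: "K \<subseteq> topspace B" using compactin_subset_topspace[OF K(1)] .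
  have "\<forall>b\<in>K. \<exists>h. h \<in> C0 B \<and> \<phi> (\<lambda>x. u x * h (r x)) \<noteq> h b"
  proof
    fix b assume b: "b \<in> K"
    show "\<exists>h. h \<in> C0 B \<and> \<phi> (\<lambda>x. u x * h (r x)) \<noteq> h b"
    proof (rule ccontr)
      assume "\<not> ?thesis"
      then have "\<forall>h\<in>C0 B. \<phi> (\<lambda>x. u x * h (r x)) = h b" by blast
      moreover have bB: "b \<in> topspace B" using b Ksub by blast
      ultimately have "qprop X B r \<phi> b" using qprop_from_u[of X B r \<phi> u b, OF r phi u(1) u(2) bB] by blast
      then show False using nex by blast
    qed
  qed
  then obtain H where H: "\<forall>b\<in>K. H b \<in> C0 B \<and> \<phi> (\<lambda>x. u x * H b (r x)) \<noteq> H b b"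
    using bchoice[of K "\<lambda>b h. h \<in> C0 B \<and> \<phi> (\<lambda>x. u x * h (r x)) \<noteq> h b"] by blast
  define chi where "chi b = \<phi> (\<lambda>x. u x * H b (r x))" for b
  define d where "d b = cmod (H b b - chi b)" for b
  define Ub where "Ub b = {y \<in> topspace B. cmod (H b y - chi b) \<in> {d b / 2<..}}" for b
  have dpos: "d b > 0" if "b \<in> K" for b
  proof -
    have "H b b \<noteq> chi b" using conjunct2[OF bspec[OF H that]] unfolding chi_def by auto
    then show ?thesis unfolding d_def by simp
  qed
  have HC0: "H b \<in> C0 B" if "b \<in> K" for b using conjunct1[OF bspec[OF H that]] .
  have Hc: "continuous_map B euclidean (H b)" if "b \<in> K" for b
    using HC0[OF that] unfolding C0_def by blast
  have Uopen: "openin B (Ub b)" if b: "b \<in> K" for b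
  proof -
    have c: "continuous_map B euclideanreal (\<lambda>y. cmod (H b y - chi b))"
      by (intro continuous_map_norm continuous_map_diff Hc[OF b] continuous_map_canonical_const)
    have "openin euclideanreal {d b / 2<..}" by simp
    then show ?thesis unfolding Ub_def by (rule openin_continuous_map_preimage[OF c])
  qed
  have bin: "b \<in> Ub b" if b: "b \<in> K" for b
    using dpos[OF b] Ksub b unfolding Ub_def d_def by auto
  have "K \<subseteq> \<Union> (Ub ` K)" using bin by blast
  moreover have "\<forall>U\<in>Ub ` K. openin B U" using Uopen by blast
  ultimately obtain F where F: "finite F" "F \<subseteq> Ub ` K" "K \<subseteq> \<Union>F"
    using K(1) unfolding compactin_def by meson
  obtain Bs where Bs: "Bs \<subseteq> K" "finite Bs" "F = Ub ` Bs"
    using finite_subset_image[OF F(1) F(2)] by blast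
  have "\<forall>b\<in>K. \<exists>M>0. \<forall>y\<in>topspace B. cmod (H b y) \<le> M"
    using H C0_bounded by blast
  then obtain Mb where Mb: "\<forall>b\<in>K. Mb b > 0 \<and> (\<forall>y\<in>topspace B. cmod (H b y) \<le> Mb b)"
    using bchoice[of K "\<lambda>b M. M > 0 \<and> (\<forall>y\<in>topspace B. cmod (H b y) \<le> M)"] by blast
  define \<eta> where "\<eta> b = d b / (4 * (Mb b + 1))" for b
  have etapos: "\<eta> b > 0" if "b \<in> K" for b
    unfolding \<eta>_def using dpos[OF that] Mb that by (simp add: add_pos_pos)
  define \<epsilon> where "\<epsilon> = Min (insert (1/2) (\<eta> ` Bs))"
  have epos: "\<epsilon> > 0" unfolding \<epsilon>_def using Bs etapos by (subst Min_gr_iff) auto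
  have ehalf: "\<epsilon> \<le> 1/2" unfolding \<epsilon>_def using Bs by (intro Min_le) auto
  have eeta: "\<epsilon> \<le> \<eta> b" if "b \<in> Bs" for b unfolding \<epsilon>_def using Bs that by (intro Min_le) auto
  define G where "G = insert u ((\<lambda>b. \<lambda>x. u x * H b (r x)) ` Bs)"
  have G: "finite G" "G \<subseteq> HX X B r"
    unfolding G_def using Bs u(1) H mulh_HX[OF r u(1)] by auto
  obtain x where x: "x \<in> topspace X" "\<forall>g\<in>G. cmod (g x - \<phi> g) < \<epsilon>"
    using joint[OF phi G epos] by blast
  have ux: "cmod (u x - 1) < \<epsilon>" using x(2) u(2) unfolding G_def by auto
  have "1 \<le> cmod (u x) + cmod (1 - u x)" using norm_triangle_ineq[of "u x" "1 - u x"] by simp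
  then have "cmod (u x) > 1/2" using ux ehalf by (simp add: norm_minus_commute)
  then have "r x \<in> K" using K(2) x(1) by fastforce
  then obtain b where b: "b \<in> Bs" "r x \<in> Ub b" using F(3) Bs(3) by blast
  have bK: "b \<in> K" using b(1) Bs(1) by blast
  have rxB: "r x \<in> topspace B" using cm_in[OF r x(1)] .
  have far: "d b / 2 < cmod (H b (r x) - chi b)" using b(2) unfolding Ub_def by auto
  have near: "cmod (u x * H b (r x) - chi b) < \<epsilon>"
    using x(2) b(1) unfolding G_def chi_def by auto
  have "cmod (H b (r x) - u x * H b (r x)) = cmod (1 - u x) * cmod (H b (r x))"
    by (simp add: norm_mult[symmetric] left_diff_distrib)
  also have "\<dots> \<le> \<epsilon> * Mb b"
    using ux Mb bK rxB epos by (intro mult_mono) (auto simp: norm_minus_commute)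
  finally have t1: "cmod (H b (r x) - u x * H b (r x)) \<le> \<epsilon> * Mb b" .
  have "cmod (H b (r x) - chi b) \<le> cmod (H b (r x) - u x * H b (r x)) + cmod (u x * H b (r x) - chi b)"
    by (rule norm_diff_triangle_le[of _ "u x * H b (r x)"]) simp_all
  also have "\<dots> < \<epsilon> * Mb b + \<epsilon>" using t1 near by simp
  also have "\<dots> = \<epsilon> * (Mb b + 1)" by (simp add: algebra_simps)
  also have "\<dots> \<le> \<eta> b * (Mb b + 1)" using eeta[OF b(1)] Mb bK by (intro mult_right_mono) auto
  also have "\<dots> = d b / 4"
  proof -
    have "Mb b + 1 > 0" using Mb bK by (simp add: add_pos_pos)
    then show ?thesis unfolding \<eta>_def by (simp add: field_simps)
  qed
  finally show False using far dpos[OF bK] by simp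
qed



definition qmap where
  "qmap X B r = restrict (\<lambda>\<phi>. SOME b. qprop X B r \<phi> b) (topspace (rel_beta X B r))"

context
  fixes X :: "'a topology" and B :: "'b topology" and r :: "'a \<Rightarrow> 'b"
  assumes r: "continuous_map X B r" and lc: "locally_compact_space B" "Hausdorff_space B"
begin

lemma qmap_prop:
  assumes phi: "\<phi> \<in> topspace (rel_beta X B r)"
  shows "qprop X B r \<phi> (qmap X B r \<phi>)"
proof -
  have "\<phi> \<in> characters (HX X B r)" using phi topspace_beta by blast
  then have "\<exists>b. qprop X B r \<phi> b" using q_exists[OF r lc] by blast
  then have "qprop X B r \<phi> (SOME b. qprop X B r \<phi> b)" by (rule someI_ex)
  then show ?thesis using phi unfolding qmap_def by simp
qed

lemma qmap_cont: "continuous_map (rel_beta X B r) B (qmap X B r)"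
  unfolding continuous_map_def
proof (intro conjI allI impI)
  show "qmap X B r \<in> topspace (rel_beta X B r) \<rightarrow> topspace B"
    using qmap_prop unfolding qprop_def by blast
  fix V assume V: "openin B V"
  let ?S = "rel_beta X B r"
  let ?P = "{\<phi> \<in> topspace ?S. qmap X B r \<phi> \<in> V}"
  show "openin ?S ?P"
  proof (subst openin_subopen, intro ballI)
    fix \<phi> assume phiP: "\<phi> \<in> ?P"
    then have phiS: "\<phi> \<in> topspace ?S" by blast
    have phic: "\<phi> \<in> characters (HX X B r)" using phiS topspace_beta by blast
    define b where "b = qmap X B r \<phi>"
    have bV: "b \<in> V" using phiP b_def by blast
    obtain h where h: "h \<in> C0 B" "h b = 1" "\<forall>y\<in>topspace B - V. h y = 0"
      using C0_urysohn[OF lc V bV] by blast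
    obtain u where u: "u \<in> HX X B r" "\<phi> u = 1" using chr_unit[OF phic] by blast
    define a where "a = (\<lambda>x. u x * h (r x))"
    have aA: "a \<in> HX X B r" unfolding a_def using mulh_HX[OF r u(1) h(1)] .
    have opnz: "openin euclidean (- {0::complex})" by (simp add: open_Compl)
    define T where "T = {\<psi> \<in> topspace ?S. \<psi> u \<in> - {0}} \<inter> {\<psi> \<in> topspace ?S. \<psi> a \<in> - {0}}"
    have "openin ?S T" unfolding T_def
      by (rule openin_Int[OF openin_continuous_map_preimage[OF proj_cont[OF u(1)] opnz]
            openin_continuous_map_preimage[OF proj_cont[OF aA] opnz]])
    moreover have "\<phi> a = 1"
    proof -
      have "qprop X B r \<phi> b" unfolding b_def using qmap_prop[OF phiS] .
      then show ?thesis unfolding a_def qprop_def using u h(1) h(2) by simp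
    qed
    then have "\<phi> \<in> T" unfolding T_def using phiS u(2) by simp
    moreover have "T \<subseteq> ?P"
    proof
      fix \<psi> assume psi: "\<psi> \<in> T"
      then have psiS: "\<psi> \<in> topspace ?S" and pu: "\<psi> u \<noteq> 0" and pa: "\<psi> a \<noteq> 0" unfolding T_def by auto
      have psic: "\<psi> \<in> characters (HX X B r)" using psiS topspace_beta by blast
      define v where "v = (\<lambda>x. (1 / \<psi> u) * u x)"
      have vA: "v \<in> HX X B r" unfolding v_def using HX_scale[OF u(1)] .
      have pv: "\<psi> v = 1" unfolding v_def using chr_scale[OF psic u(1), of "1 / \<psi> u"] pu by simp
      have qp: "qprop X B r \<psi> (qmap X B r \<psi>)" using qmap_prop[OF psiS] .
      have "\<psi> (\<lambda>x. v x * h (r x)) = h (qmap X B r \<psi>)" using qp vA pv h(1) unfolding qprop_def by simp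
      moreover have "(\<lambda>x. v x * h (r x)) = (\<lambda>x. (1 / \<psi> u) * a x)" unfolding v_def a_def by (simp add: fun_eq_iff)
      moreover have "\<psi> (\<lambda>x. (1 / \<psi> u) * a x) = (1 / \<psi> u) * \<psi> a" using chr_scale[OF psic aA] .
      ultimately have "h (qmap X B r \<psi>) \<noteq> 0" using pu pa by simp
      moreover have "qmap X B r \<psi> \<in> topspace B" using qp unfolding qprop_def by blast
      ultimately have "qmap X B r \<psi> \<in> V" using h(3) by blast
      then show "\<psi> \<in> ?P" using psiS by blast
    qed
    ultimately show "\<exists>T. openin ?S T \<and> \<phi> \<in> T \<and> T \<subseteq> ?P" by blast
  qed
qed

lemma i_top: "x \<in> topspace X \<Longrightarrow> rel_i X B r x \<in> topspace (rel_beta X B r)"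
  using i_char[OF r lc] topspace_beta by blast

lemma qmap_i:
  assumes x: "x \<in> topspace X"
  shows "qmap X B r (rel_i X B r x) = r x"
proof -
  have iS: "rel_i X B r x \<in> topspace (rel_beta X B r)" using i_top[OF x] .
  have ic: "rel_i X B r x \<in> characters (HX X B r)" using iS topspace_beta by blast
  have "qprop X B r (rel_i X B r x) (r x)"
    unfolding qprop_def
  proof (intro conjI ballI impI)
    show "r x \<in> topspace B" using cm_in[OF r x] .
    fix v h assume v: "v \<in> HX X B r" "rel_i X B r x v = 1" and h: "h \<in> C0 B"
    have "v x = 1" using v by (simp add: rel_i_def)
    then show "rel_i X B r x (\<lambda>x. v x * h (r x)) = h (r x)"
      using mulh_HX[OF r v(1) h] by (simp add: rel_i_def)
  qed
  then show ?thesis using q_unique[OF r lc ic] qmap_prop[OF iS] by blast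
qed

lemma dense_i': "s \<in> topspace (rel_beta X B r) \<Longrightarrow> openin (rel_beta X B r) W \<Longrightarrow> s \<in> W
   \<Longrightarrow> \<exists>d\<in>rel_i X B r ` topspace X. d \<in> W"
  using dense_i[OF r lc] by blast

lemma rel_beta_map_eq:
  assumes phi: "\<phi> \<in> topspace (rel_beta X B r)"
  shows "rel_beta_map X B r \<phi> = qmap X B r \<phi>"
proof -
  let ?S = "rel_beta X B r"
  let ?P = "\<lambda>q. continuous_map ?S B q \<and> (\<forall>x\<in>topspace X. q (rel_i X B r x) = r x) \<and> q \<in> extensional (topspace ?S)"
  have Pq: "?P (qmap X B r)" using qmap_cont qmap_i unfolding qmap_def by auto
  have uq: "q = qmap X B r" if q: "?P q" for q
  proof
    fix s
    show "q s = qmap X B r s"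
    proof (cases "s \<in> topspace ?S")
      case True
      have qi: "\<forall>x\<in>topspace X. q (rel_i X B r x) = r x" using q by blast
      have eqD: "\<forall>d\<in>rel_i X B r ` topspace X. q d = qmap X B r d" using qi qmap_i by simp
      have "\<forall>s\<in>topspace ?S. q s = qmap X B r s"
        by (rule eq_on_dense[OF conjunct1[OF q] qmap_cont lc(2) _ eqD]) (fact dense_i')
      then show ?thesis using True by blast
    next
      case False
      have qme: "qmap X B r \<in> extensional (topspace ?S)" unfolding qmap_def by simp
      have qe: "q \<in> extensional (topspace ?S)" using q by blast
      show ?thesis using extensional_arb[OF qe False] extensional_arb[OF qme False] by simp
    qed
  qed
  have "(THE q. ?P q) = qmap X B r" by (rule the_equality[of ?P, OF Pq uq])
  then show ?thesis unfolding rel_beta_map_def by simp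
qed

lemma rel_beta_map_prop:
  "\<phi> \<in> topspace (rel_beta X B r) \<Longrightarrow> qprop X B r \<phi> (rel_beta_map X B r \<phi>)"
  using rel_beta_map_eq qmap_prop by metis

lemma beta_Hausdorff: "Hausdorff_space (rel_beta X B r)"
  unfolding rel_beta_def spectrum_top_def
  by (intro Hausdorff_space_subtopology) (simp add: Hausdorff_space_product_topology)

end



definition pull :: "'a topology \<Rightarrow> ('a \<Rightarrow> 'b) \<Rightarrow> ('b \<Rightarrow> complex) \<Rightarrow> 'a \<Rightarrow> complex" where
  "pull X1 f g = (\<lambda>x. if x \<in> topspace X1 then g (f x) else 0)"

lemma pull_add: "pull X1 f (\<lambda>x. a x + b x) = (\<lambda>x. pull X1 f a x + pull X1 f b x)"
  by (simp add: pull_def fun_eq_iff)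

lemma pull_mult: "pull X1 f (\<lambda>x. a x * b x) = (\<lambda>x. pull X1 f a x * pull X1 f b x)"
  by (simp add: pull_def fun_eq_iff)

lemma pull_scale: "pull X1 f (\<lambda>x. c * a x) = (\<lambda>x. c * pull X1 f a x)"
  by (simp add: pull_def fun_eq_iff)

lemma C0_comp_proper:
  assumes f0: "continuous_map B1 B2 f0" and pr: "proper_preimage B1 B2 f0" and h: "h \<in> C0 B2"
  shows "(\<lambda>y. h (f0 y)) \<in> C0 B1"
proof -
  have hc: "continuous_map B2 euclidean h" using h unfolding C0_def by blast
  have c: "continuous_map B1 euclidean (\<lambda>y. h (f0 y))"
    using continuous_map_compose[OF f0 hc] unfolding o_def .
  have "\<exists>K. compactin B1 K \<and> (\<forall>y\<in>topspace B1 - K. cmod (h (f0 y)) < e)" if e: "e > 0" for e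
  proof -
    obtain K2 where K2: "compactin B2 K2" "\<forall>y\<in>topspace B2 - K2. cmod (h y) < e"
      using C0_vanish[OF h e] by blast
    have K1: "compactin B1 {x \<in> topspace B1. f0 x \<in> K2}" using pr K2(1) unfolding proper_preimage_def by blast
    have "\<forall>y\<in>topspace B1 - {x \<in> topspace B1. f0 x \<in> K2}. cmod (h (f0 y)) < e"
    proof
      fix y assume y: "y \<in> topspace B1 - {x \<in> topspace B1. f0 x \<in> K2}"
      then have "f0 y \<in> topspace B2 - K2" using cm_in[OF f0] by blast
      then show "cmod (h (f0 y)) < e" using K2(2) by blast
    qed
    then show ?thesis using K1 by blast
  qed
  then show ?thesis unfolding C0_def using c by blast
qed

context
  fixes X1 :: "'a topology" and X2 :: "'b topology" and B1 :: "'c topology" and B2 :: "'d topology"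
    and f :: "'a \<Rightarrow> 'b" and r1 :: "'a \<Rightarrow> 'c" and r2 :: "'b \<Rightarrow> 'd" and f0 :: "'c \<Rightarrow> 'd"
  assumes f: "continuous_map X1 X2 f" and r1: "continuous_map X1 B1 r1" and r2: "continuous_map X2 B2 r2"
    and f0: "continuous_map B1 B2 f0"
    and comm: "\<forall>x\<in>topspace X1. r2 (f x) = f0 (r1 x)"
    and pr: "proper_preimage B1 B2 f0"
begin

lemma pull_Cb:
  assumes g: "g \<in> Cb X2"
  shows "pull X1 f g \<in> Cb X1"
proof -
  obtain M where M: "M > 0" "\<forall>x\<in>topspace X2. cmod (g x) \<le> M" using Cb_bound[OF g] by blast
  have gc: "continuous_map X2 euclidean g" using g unfolding Cb_iff by blast
  have c: "continuous_map X1 euclidean (\<lambda>x. g (f x))"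
    using continuous_map_compose[OF f gc] unfolding o_def .
  have b: "\<forall>x\<in>topspace X1. cmod (g (f x)) \<le> M" using M(2) cm_in[OF f] by blast
  show ?thesis unfolding pull_def using restrict_Cb[OF c b] .
qed

lemma pull_span:
  assumes "p \<in> lin_span (gens X2 B2 r2)"
  shows "pull X1 f p \<in> lin_span (gens X1 B1 r1)"
  using assms
proof induction
  case zero
  have "pull X1 f (\<lambda>x. 0) = (\<lambda>x. 0)" by (simp add: pull_def fun_eq_iff)
  then show ?case by (simp add: lin_span.zero)
next
  case (base g)
  then obtain g' h where gh: "g = (\<lambda>x. g' x * h (r2 x))" "g' \<in> Cb X2" "h \<in> C0 B2"
    unfolding gens_def by blast
  have "pull X1 f g = (\<lambda>x. pull X1 f g' x * (\<lambda>y. h (f0 y)) (r1 x))"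
    using comm unfolding gh(1) pull_def by (auto simp: fun_eq_iff)
  moreover have "(\<lambda>x. pull X1 f g' x * (\<lambda>y. h (f0 y)) (r1 x)) \<in> gens X1 B1 r1"
    by (rule gensI[OF pull_Cb[OF gh(2)] C0_comp_proper[OF f0 pr gh(3)]])
  ultimately show ?case by (simp add: lin_span.base)
next
  case (add g k)
  then show ?case unfolding pull_add using lin_span.add by blast
next
  case (smult g c)
  then show ?case unfolding pull_scale using lin_span.smult by blast
qed

lemma pull_HX:
  assumes g: "g \<in> HX X2 B2 r2"
  shows "pull X1 f g \<in> HX X1 B1 r1"
proof -
  have Cb1: "pull X1 f g \<in> Cb X1" using pull_Cb[OF HX_Cb[OF g]] .
  have "\<exists>p\<in>lin_span (gens X1 B1 r1). \<forall>x\<in>topspace X1. cmod (pull X1 f g x - p x) < e" if e: "e > 0" for e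
  proof -
    obtain p where p: "p \<in> lin_span (gens X2 B2 r2)" "\<forall>y\<in>topspace X2. cmod (g y - p y) < e"
      using HX_approx[OF g e] by blast
    have "\<forall>x\<in>topspace X1. cmod (pull X1 f g x - pull X1 f p x) < e"
      using p(2) cm_in[OF f] by (simp add: pull_def)
    then show ?thesis using pull_span[OF p(1)] by blast
  qed
  then show ?thesis unfolding HX_alt using Cb1 by blast
qed


end



lemma qprop_apply:
  "qprop X B r \<phi> b \<Longrightarrow> v \<in> HX X B r \<Longrightarrow> \<phi> v = 1 \<Longrightarrow> h \<in> C0 B \<Longrightarrow> \<phi> (\<lambda>x. v x * h (r x)) = h b"
  unfolding qprop_def by blast

theorem lemma4p13:
  fixes X1 :: "'a topology" and X2 :: "'b topology" and B1 :: "'c topology" and B2 :: "'d topology"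
    and f :: "'a \<Rightarrow> 'b" and r1 :: "'a \<Rightarrow> 'c" and r2 :: "'b \<Rightarrow> 'd" and f0 :: "'c \<Rightarrow> 'd"
  assumes "continuous_map X1 X2 f" and "continuous_map X1 B1 r1" and "continuous_map X2 B2 r2"
    and "continuous_map B1 B2 f0"
    and "\<forall>x\<in>topspace X1. r2 (f x) = f0 (r1 x)"
    and "locally_compact_space B1" and "Hausdorff_space B1"
    and "locally_compact_space B2" and "Hausdorff_space B2"
    and "proper_preimage B1 B2 f0"
  shows "\<exists>ft. (continuous_map (rel_beta X1 B1 r1) (rel_beta X2 B2 r2) ft \<and>
              (\<forall>x\<in>topspace X1. ft (rel_i X1 B1 r1 x) = rel_i X2 B2 r2 (f x)) \<and>
              (\<forall>p\<in>topspace (rel_beta X1 B1 r1).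
                  rel_beta_map X2 B2 r2 (ft p) = f0 (rel_beta_map X1 B1 r1 p))) \<and>
           (\<forall>g. continuous_map (rel_beta X1 B1 r1) (rel_beta X2 B2 r2) g \<and>
              (\<forall>x\<in>topspace X1. g (rel_i X1 B1 r1 x) = rel_i X2 B2 r2 (f x)) \<and>
              (\<forall>p\<in>topspace (rel_beta X1 B1 r1).
                  rel_beta_map X2 B2 r2 (g p) = f0 (rel_beta_map X1 B1 r1 p))
              \<longrightarrow> (\<forall>p\<in>topspace (rel_beta X1 B1 r1). g p = ft p))"
proof -
  note f = assms(1) and r1 = assms(2) and r2 = assms(3) and f0 = assms(4) and comm = assms(5)
    and lc1 = assms(6,7) and lc2 = assms(8,9) and pr = assms(10)
  let ?A1 = "HX X1 B1 r1" and ?A2 = "HX X2 B2 r2"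
  let ?S1 = "rel_beta X1 B1 r1" and ?S2 = "rel_beta X2 B2 r2"
  note pullHX = pull_HX[OF f r1 r2 f0 comm pr]
  define F where "F \<phi> = restrict (\<lambda>g. \<phi> (pull X1 f g)) ?A2" for \<phi> :: "('a \<Rightarrow> complex) \<Rightarrow> complex"
  have Fchar: "F \<phi> \<in> characters ?A2" if phi: "\<phi> \<in> characters ?A1" for \<phi>
  proof -
    have phiS: "\<phi> \<in> topspace ?S1" using phi topspace_beta by blast
    define b1 where "b1 = rel_beta_map X1 B1 r1 \<phi>"
    have qp: "qprop X1 B1 r1 \<phi> b1" unfolding b1_def using rel_beta_map_prop[OF r1 lc1 phiS] .
    have b1B: "b1 \<in> topspace B1" using qp unfolding qprop_def by blast
    have fb1: "f0 b1 \<in> topspace B2" using cm_in[OF f0 b1B] .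
    obtain h where h: "h \<in> C0 B2" "h (f0 b1) = 1"
      using C0_urysohn[OF lc2 openin_topspace fb1] by blast
    define g where "g = (\<lambda>y. if y \<in> topspace X2 then h (r2 y) else 0)"
    have gA: "g \<in> ?A2" unfolding g_def using gen_in_HX[OF r2 h(1)] .
    have pgA: "pull X1 f g \<in> ?A1" using pullHX[OF gA] .
    obtain u where u: "u \<in> ?A1" "\<phi> u = 1" using chr_unit[OF phi] by blast
    have hf0: "(\<lambda>y. h (f0 y)) \<in> C0 B1" using C0_comp_proper[OF f0 pr h(1)] .
    have "(\<lambda>x. u x * (\<lambda>y. h (f0 y)) (r1 x)) = (\<lambda>x. u x * pull X1 f g x)"
    proof
      fix x show "u x * (\<lambda>y. h (f0 y)) (r1 x) = u x * pull X1 f g x"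
      proof (cases "x \<in> topspace X1")
        case True
        then show ?thesis using comm cm_in[OF f True] by (simp add: pull_def g_def)
      next
        case False
        then have "u x = 0" using HX_Cb[OF u(1)] unfolding Cb_iff by blast
        then show ?thesis by simp
      qed
    qed
    moreover have "\<phi> (\<lambda>x. u x * (\<lambda>y. h (f0 y)) (r1 x)) = h (f0 b1)"
      using qprop_apply[of X1 B1 r1 \<phi> b1 u "\<lambda>y. h (f0 y)", OF qp u(1) u(2) hf0] .
    moreover have "\<phi> (\<lambda>x. u x * pull X1 f g x) = \<phi> u * \<phi> (pull X1 f g)"
      using chr_mult[OF phi u(1) pgA] .
    ultimately have "\<phi> (pull X1 f g) = 1" using u(2) h(2) by simp
    then have nz: "\<exists>a\<in>?A2. F \<phi> a \<noteq> 0" using gA unfolding F_def by (intro bexI[OF _ gA]) simp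
    show ?thesis
      unfolding characters_def
    proof (intro CollectI conjI ballI allI)
      show "F \<phi> \<in> extensional ?A2" unfolding F_def by simp
      show "\<exists>a\<in>?A2. F \<phi> a \<noteq> 0" using nz .
      fix a b assume ab: "a \<in> ?A2" "b \<in> ?A2"
      show "F \<phi> (\<lambda>x. a x + b x) = F \<phi> a + F \<phi> b"
        using HX_add[OF ab] ab chr_add[OF phi pullHX[OF ab(1)] pullHX[OF ab(2)]]
        unfolding F_def by (simp add: pull_add)
      show "F \<phi> (\<lambda>x. a x * b x) = F \<phi> a * F \<phi> b"
        using HX_prod[OF ab] ab chr_mult[OF phi pullHX[OF ab(1)] pullHX[OF ab(2)]]
        unfolding F_def by (simp add: pull_mult)
    next
      fix c a assume a: "a \<in> ?A2"
      show "F \<phi> (\<lambda>x. c * a x) = c * F \<phi> a"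
        using HX_scale[OF a] a chr_scale[OF phi pullHX[OF a]]
        unfolding F_def by (simp add: pull_scale)
    qed
  qed
  have Fcont: "continuous_map ?S1 ?S2 F"
  proof -
    have "continuous_map ?S1 (product_topology (\<lambda>_. euclidean) ?A2) F"
      unfolding continuous_map_componentwise
    proof (intro conjI ballI)
      show "F ` topspace ?S1 \<subseteq> extensional ?A2" unfolding F_def by auto
      fix k assume k: "k \<in> ?A2"
      show "continuous_map ?S1 euclidean (\<lambda>x. F x k)"
        using proj_cont[OF pullHX[OF k]] by (rule continuous_map_eq) (simp add: F_def k)
    qed
    moreover have "F \<in> topspace ?S1 \<rightarrow> characters ?A2" using Fchar topspace_beta by blast
    ultimately show ?thesis
      unfolding rel_beta_def[of X2 B2 r2] spectrum_top_def continuous_map_in_subtopology by blast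
  qed
  have Fi: "F (rel_i X1 B1 r1 x) = rel_i X2 B2 r2 (f x)" if x: "x \<in> topspace X1" for x
  proof
    fix g
    show "F (rel_i X1 B1 r1 x) g = rel_i X2 B2 r2 (f x) g"
    proof (cases "g \<in> ?A2")
      case True
      then show ?thesis using pullHX[OF True] x by (simp add: F_def rel_i_def pull_def)
    next
      case False
      then show ?thesis by (simp add: F_def rel_i_def)
    qed
  qed
  have Fq: "rel_beta_map X2 B2 r2 (F p) = f0 (rel_beta_map X1 B1 r1 p)" if p: "p \<in> topspace ?S1" for p
  proof -
    have pc: "p \<in> characters ?A1" using p topspace_beta by blast
    have FpS: "F p \<in> topspace ?S2" using Fchar[OF pc] topspace_beta by blast
    have Fpc: "F p \<in> characters ?A2" using Fchar[OF pc] .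
    define b1 where "b1 = rel_beta_map X1 B1 r1 p"
    have qp: "qprop X1 B1 r1 p b1" unfolding b1_def using rel_beta_map_prop[OF r1 lc1 p] .
    have b1B: "b1 \<in> topspace B1" using qp unfolding qprop_def by blast
    have "qprop X2 B2 r2 (F p) (f0 b1)"
      unfolding qprop_def
    proof (intro conjI ballI impI)
      show "f0 b1 \<in> topspace B2" using cm_in[OF f0 b1B] .
      fix v h assume v: "v \<in> ?A2" "F p v = 1" and h: "h \<in> C0 B2"
      have pv: "p (pull X1 f v) = 1" using v unfolding F_def by simp
      have vh: "(\<lambda>x. v x * h (r2 x)) \<in> ?A2" using mulh_HX[OF r2 v(1) h] .
      have hf0: "(\<lambda>y. h (f0 y)) \<in> C0 B1" using C0_comp_proper[OF f0 pr h] .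
      have eq: "pull X1 f (\<lambda>x. v x * h (r2 x)) = (\<lambda>x. pull X1 f v x * (\<lambda>y. h (f0 y)) (r1 x))"
        using comm by (auto simp: pull_def fun_eq_iff)
      have "F p (\<lambda>x. v x * h (r2 x)) = p (pull X1 f (\<lambda>x. v x * h (r2 x)))"
        using vh unfolding F_def by simp
      also have "\<dots> = p (\<lambda>x. pull X1 f v x * (\<lambda>y. h (f0 y)) (r1 x))" unfolding eq ..
      also have "\<dots> = h (f0 b1)"
        using qprop_apply[of X1 B1 r1 p b1 "pull X1 f v" "\<lambda>y. h (f0 y)", OF qp pullHX[OF v(1)] pv hf0] .
      finally show "F p (\<lambda>x. v x * h (r2 x)) = h (f0 b1)" .
    qed
    moreover have "qprop X2 B2 r2 (F p) (rel_beta_map X2 B2 r2 (F p))"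
      using rel_beta_map_prop[OF r2 lc2 FpS] .
    ultimately show ?thesis unfolding b1_def using q_unique[OF r2 lc2 Fpc] by metis
  qed
  have uniq: "\<forall>p\<in>topspace ?S1. g p = F p"
    if g: "continuous_map ?S1 ?S2 g" "\<forall>x\<in>topspace X1. g (rel_i X1 B1 r1 x) = rel_i X2 B2 r2 (f x)" for g
  proof -
    have eqD: "\<forall>d\<in>rel_i X1 B1 r1 ` topspace X1. g d = F d" using g(2) Fi by simp
    show ?thesis
      by (rule eq_on_dense[OF g(1) Fcont beta_Hausdorff[OF r2 lc2] _ eqD]) (fact dense_i'[OF r1 lc1])
  qed
  show ?thesis
    apply (rule exI[of _ F])
    using Fcont Fi Fq uniq by blast
qed


end
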